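(* Let $n\ge 3$ be an integer and $a,b\in\mathbb{C}$ with $b\neq 0$. Let $A$ be the $n\times n$ tridiagonal matrix with all diagonal entries equal to $a$, all subdiagonal entries $A_{k+1,k}$ ($k=1,\dots,n-1$) equal to $b$, superdiagonal entries $A_{1,2}=A_{n-1,n}=2b$, and all other superdiagonal entries $A_{k,k+1}=b$ ($2\le k\le n-2$); all remaining entries are $0$. Then the eigenvalues of $A$ are $$\lambda_k=a+2b\cos\left(\frac{(k-1)\pi}{n-1}\right),\quad k=1,2,\dots,n,$$ and, writing $\delta_j=\frac{\lambda_j-a}{b}$, for each $j=1,\dots,n$ the vector $(x_{1j},\dots,x_{nj})^T$ with $$x_{kj}=T_{k-1}\left(\tfrac{\delta_j}{2}\right)\ (k=1,\dots,n-1),\qquad x_{nj}=\tfrac12 T_{n-1}\left(\tfrac{\delta_j}{2}\right)$$ is an eigenvector of $A$ corresponding to $\lambda_j$.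
   Context: $T_m(x)$ denotes the Chebyshev polynomial of the first kind: $T_0=1$, $T_1=x$, $T_{m+1}(x)=2xT_m(x)-T_{m-1}(x)$, equivalently $T_m(\cos\theta)=\cos(m\theta)$. *)

theory Defs
  imports Complex_Main "Jordan_Normal_Form.Char_Poly"
begin

fun cheb_T :: "nat \<Rightarrow> 'a :: comm_ring_1 \<Rightarrow> 'a" where
  "cheb_T 0 x = 1"
| "cheb_T (Suc 0) x = x"
| "cheb_T (Suc (Suc m)) x = 2 * x * cheb_T (Suc m) x - cheb_T m x"

text \<open>The n x n tridiagonal matrix of the statement, with 0-based indices:
  entry (i,j) of this matrix is the paper's entry A_{i+1,j+1}.\<close>
definition tri_mat :: "nat \<Rightarrow> complex \<Rightarrow> complex \<Rightarrow> complex mat" where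
  "tri_mat n a b = mat n n (\<lambda>(i, j).
     if i = j then a
     else if i = j + 1 then b
     else if j = i + 1 then (if i = 0 \<or> i = n - 2 then 2 * b else b)
     else 0)"

definition tri_lambda :: "nat \<Rightarrow> complex \<Rightarrow> complex \<Rightarrow> nat \<Rightarrow> complex" where
  "tri_lambda n a b k = a + 2 * b * complex_of_real (cos (real (k - 1) * pi / real (n - 1)))"

text \<open>Paper's eigenvector for lambda_j, as a 0-based vector: component i is x_{i+1,j}.\<close>
definition tri_evec :: "nat \<Rightarrow> complex \<Rightarrow> complex \<Rightarrow> nat \<Rightarrow> complex vec" where
  "tri_evec n a b j = (let d = (tri_lambda n a b j - a) / b in
     vec n (\<lambda>i. if i < n - 1 then cheb_T i (d / 2) else cheb_T (n - 1) (d / 2) / 2))"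

end

theory Submission
  imports Defs
begin

lemma cheb_of_real: "cheb_T m (complex_of_real x) = complex_of_real (cheb_T m x)"
  by (induction m x rule: cheb_T.induct) auto

lemma cheb_cos: "cheb_T m (cos t) = cos (real m * t)"
proof (induction m t rule: cheb_T.induct)
  case (3 m x)
  have "cos (real (Suc (Suc m)) * x) = cos ((real (Suc m)) * x + x)"
    by (simp add: algebra_simps)
  moreover have "cos (real m * x) = cos ((real (Suc m)) * x - x)"
    by (simp add: algebra_simps)
  ultimately show ?case using 3 by (simp add: cos_add cos_diff)
qed auto

lemma cheb_rec: "i \<ge> 1 \<Longrightarrow> cheb_T (i+1) x = 2 * x * cheb_T i x - cheb_T (i - 1) x"
  by (cases i) auto

lemma tri_mulv:
  assumes i: "i < n" and dv: "dim_vec v = n"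
  shows "(tri_mat n a b *\<^sub>v v) $ i = a * v $ i + (if i \<ge> 1 then b * v $ (i - 1) else 0)
     + (if i + 1 < n then (if i = 0 \<or> i = n - 2 then 2 * b else b) * v $ (i+1) else 0)"
proof -
  have "(tri_mat n a b *\<^sub>v v) $ i = (\<Sum>k<n. (if k = i then a * v $ k else 0)
      + (if k = i - 1 \<and> i \<ge> 1 then b * v $ k else 0)
      + (if k = i + 1 then (if i = 0 \<or> i = n - 2 then 2 * b else b) * v $ k else 0))"
    unfolding tri_mat_def mult_mat_vec_def scalar_prod_def using i dv
    by (auto simp: lessThan_atLeast0 intro!: sum.cong)
  also have "\<dots> = (\<Sum>k<n. (if k = i then a * v $ k else 0))
      + (\<Sum>k<n. (if k = i - 1 \<and> i \<ge> 1 then b * v $ k else 0))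
      + (\<Sum>k<n. (if k = i + 1 then (if i = 0 \<or> i = n - 2 then 2 * b else b) * v $ k else 0))"
    by (simp add: sum.distrib)
  also have "\<dots> = a * v $ i + (if i \<ge> 1 then b * v $ (i - 1) else 0)
     + (if i + 1 < n then (if i = 0 \<or> i = n - 2 then 2 * b else b) * v $ (i+1) else 0)"
  proof -
    have "(\<Sum>k<n. (if k = i - 1 \<and> i \<ge> 1 then b * v $ k else 0)) = (if i \<ge> 1 then b * v $ (i - 1) else 0)"
      using i by (cases "i \<ge> 1") (auto simp: sum.delta')
    then show ?thesis using i by (simp add: sum.delta')
  qed
  finally show ?thesis .
qed

lemma tri_carrier: "tri_mat n a b \<in> carrier_mat n n"
  unfolding tri_mat_def by simp

lemma cheb_key:
  assumes n: "n \<ge> 3" and j: "j \<in> {1..n}"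
  defines "c \<equiv> complex_of_real (cos (real (j - 1) * pi / real (n - 1)))"
  shows "cheb_T (n - 2) c = c * cheb_T (n - 1) c"
proof -
  define t where "t = real (j - 1) * pi / real (n - 1)"
  have nt: "real (n - 1) * t = real (j - 1) * pi" using n unfolding t_def by simp
  have "cos (real (n - 2) * t) = cos (real (n - 1) * t - t)"
    using n by (simp add: of_nat_diff algebra_simps)
  also have "\<dots> = cos t * cos (real (n - 1) * t)"
    unfolding cos_diff nt by simp
  finally have "cheb_T (n - 2) (cos t) = cos t * cheb_T (n - 1) (cos t)"
    by (simp add: cheb_cos)
  then show ?thesis unfolding c_def t_def[symmetric] cheb_of_real
    by (metis of_real_mult)
qed

lemma evec_part:
  assumes n: "n \<ge> 3" and b: "b \<noteq> 0" and j: "j \<in> {1..n}"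
  shows "eigenvector (tri_mat n a b) (tri_evec n a b j) (tri_lambda n a b j)"
proof -
  define c where "c = complex_of_real (cos (real (j - 1) * pi / real (n - 1)))"
  have lam: "tri_lambda n a b j = a + 2 * b * c" unfolding tri_lambda_def c_def by simp
  have dd: "(tri_lambda n a b j - a) / b / 2 = c" using b unfolding lam by simp
  define x where "x = vec n (\<lambda>i. if i < n - 1 then cheb_T i c else cheb_T (n - 1) c / 2)"
  have ev: "tri_evec n a b j = x" unfolding tri_evec_def x_def Let_def dd ..
  have key: "cheb_T (n - 2) c = c * cheb_T (n - 1) c" using cheb_key[OF n j] unfolding c_def .
  have dx: "dim_vec x = n" unfolding x_def by simp
  have mv: "tri_mat n a b *\<^sub>v x = (a + 2 * b * c) \<cdot>\<^sub>v x"
  proof (rule eq_vecI)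
    show "dim_vec (tri_mat n a b *\<^sub>v x) = dim_vec ((a + 2 * b * c) \<cdot>\<^sub>v x)"
      using dx by (simp add: tri_mat_def)
    fix i assume "i < dim_vec ((a + 2 * b * c) \<cdot>\<^sub>v x)"
    then have i: "i < n" using dx by simp
    show "(tri_mat n a b *\<^sub>v x) $ i = ((a + 2 * b * c) \<cdot>\<^sub>v x) $ i"
      unfolding tri_mulv[OF i dx]
    proof -
      consider "i = 0" | "1 \<le> i \<and> i < n - 2" | "i = n - 2" | "i = n - 1" using i n by linarith
      then show "a * x $ i + (if 1 \<le> i then b * x $ (i - 1) else 0) +
          (if i + 1 < n then (if i = 0 \<or> i = n - 2 then 2 * b else b) * x $ (i + 1) else 0) =
          ((a + 2 * b * c) \<cdot>\<^sub>v x) $ i"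
      proof cases
        case 1 then show ?thesis using n i unfolding x_def by (simp add: algebra_simps)
      next
        case 2
        have r: "cheb_T (Suc i) c = 2 * c * cheb_T i c - cheb_T (i - 1) c" using 2 cheb_rec by fastforce
        have x1: "x $ (Suc i) = cheb_T (Suc i) c" "x $ (i - 1) = cheb_T (i - 1) c" "x $ i = cheb_T i c" "x $ (i - Suc 0) = cheb_T (i - Suc 0) c"
          using 2 unfolding x_def by auto
        have sm: "((a + 2 * b * c) \<cdot>\<^sub>v x) $ i = (a + 2 * b * c) * x $ i" using i dx by simp
        have si: "i + 1 < n" "1 \<le> i" "\<not> (i = 0 \<or> i = n - 2)" using 2 by auto
        show ?thesis unfolding sm using si by (simp add: x1 r algebra_simps)
      next
        case 3
        have i1: "1 \<le> i" using 3 n by simp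
        have r: "cheb_T (Suc i) c = 2 * c * cheb_T i c - cheb_T (i - Suc 0) c"
          using cheb_rec[OF i1, of c] by simp
        have x1: "x $ (Suc i) = cheb_T (Suc i) c / 2" "x $ i = cheb_T i c"
          "x $ (i - Suc 0) = cheb_T (i - Suc 0) c"
          using 3 n unfolding x_def by (auto simp: Suc_diff_Suc numeral_2_eq_2)
        have sm: "((a + 2 * b * c) \<cdot>\<^sub>v x) $ i = (a + 2 * b * c) * x $ i" using i dx by simp
        have si: "Suc i < n" "1 \<le> i" using 3 n by auto
        have cf: "(if i = 0 \<or> i = n - 2 then 2 * b else b) = 2 * b" using 3 by simp
        show ?thesis unfolding sm cf using si by (simp add: x1 r field_simps)
      next
        case 4
        have x1: "x $ i = cheb_T (n - 1) c / 2" "x $ (i - 1) = cheb_T (n - 2) c"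
          using 4 n unfolding x_def by (auto simp: numeral_2_eq_2)
        have sm: "((a + 2 * b * c) \<cdot>\<^sub>v x) $ i = (a + 2 * b * c) * x $ i" using i dx by simp
        have if1: "(if 1 \<le> i then b * x $ (i - 1) else 0) = b * x $ (i - 1)" using 4 n by simp
        have if2: "(if i + 1 < n then (if i = 0 \<or> i = n - 2 then 2 * b else b) * x $ (i + 1) else 0) = 0"
          using 4 n by simp
        have i1: "Suc 0 \<le> i" using 4 n by simp
        have ar: "a * (cheb_T (n - 1) c / 2) + b * (c * cheb_T (n - 1) c) + 0
            = (a + 2 * b * c) * (cheb_T (n - 1) c / 2)"
          by (simp add: distrib_right)
        show ?thesis unfolding sm if1 if2 unfolding x1 key by (rule ar)
      qed
    qed
  qed
  have nz: "x \<noteq> 0\<^sub>v n"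
  proof
    assume "x = 0\<^sub>v n"
    then have "x $ 0 = 0" using n by simp
    then show False using n unfolding x_def by simp
  qed
  have dr: "dim_row (tri_mat n a b) = n" unfolding tri_mat_def by (rule dim_row_mat)
  have cv: "x \<in> carrier_vec n" using dx by (rule carrier_vecI)
  show ?thesis unfolding eigenvector_def dr ev lam by (intro conjI cv nz mv)
qed

lemma root_prod_list: "poly (\<Prod>a\<leftarrow>as. [:- a, 1:]) (y::complex) = 0 \<Longrightarrow> y \<in> set as"
  by (induction as) auto

lemma lam_inj:
  assumes n: "n \<ge> 3" and b: "b \<noteq> 0"
  shows "inj_on (tri_lambda n a b) {1..n}"
proof
  fix k l assume k: "k \<in> {1..n}" and l: "l \<in> {1..n}" and eq: "tri_lambda n a b k = tri_lambda n a b l"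
  have "cos (real (k - 1) * pi / real (n - 1)) = cos (real (l - 1) * pi / real (n - 1))"
    using eq b unfolding tri_lambda_def by simp
  moreover have "0 \<le> real (k - 1) * pi / real (n - 1)" "real (k - 1) * pi / real (n - 1) \<le> pi"
    "0 \<le> real (l - 1) * pi / real (n - 1)" "real (l - 1) * pi / real (n - 1) \<le> pi"
    using k l n by (auto simp: field_simps)
  ultimately have "real (k - 1) * pi / real (n - 1) = real (l - 1) * pi / real (n - 1)"
    using cos_inj_pi by blast
  then have "real (k - 1) = real (l - 1)" using n by (simp add: field_simps)
  then have "k - 1 = l - 1" by simp
  then show "k = l" using k l by simp arith
qed

theorem theorem1:
  fixes n :: nat and a b :: complex
  assumes "n \<ge> 3" and "b \<noteq> 0"
  shows "char_poly (tri_mat n a b) = (\<Prod>k\<in>{1..n}. [: - tri_lambda n a b k, 1 :])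
         \<and> (\<forall>j\<in>{1..n}. eigenvector (tri_mat n a b) (tri_evec n a b j) (tri_lambda n a b j))"
proof
  show evs: "\<forall>j\<in>{1..n}. eigenvector (tri_mat n a b) (tri_evec n a b j) (tri_lambda n a b j)"
    using evec_part assms by blast
  obtain as where cp: "char_poly (tri_mat n a b) = (\<Prod>a\<leftarrow>as. [:- a, 1:])" and len: "length as = n"
    using char_poly_factorized[OF tri_carrier] by blast
  have sub: "tri_lambda n a b ` {1..n} \<subseteq> set as"
  proof
    fix y assume "y \<in> tri_lambda n a b ` {1..n}"
    then obtain j where j: "j \<in> {1..n}" and y: "y = tri_lambda n a b j" by blast
    have "eigenvalue (tri_mat n a b) y" unfolding eigenvalue_def y using evs j by blast
    then have "poly (char_poly (tri_mat n a b)) y = 0"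
      using eigenvalue_root_char_poly[OF tri_carrier] by blast
    then show "y \<in> set as" unfolding cp by (rule root_prod_list)
  qed
  have ci: "card (tri_lambda n a b ` {1..n}) = n"
    using card_image[OF lam_inj[OF assms]] by simp
  have "card (set as) \<le> n" using len card_length by metis
  moreover have "n \<le> card (set as)" using card_mono[OF _ sub] ci by simp
  ultimately have cs: "card (set as) = length as" using len by simp
  have st: "set as = tri_lambda n a b ` {1..n}"
    using card_subset_eq[OF _ sub] ci cs len by simp
  have "(\<Prod>a\<leftarrow>as. [:- a, 1:]) = (\<Prod>a\<in>set as. [:- a, 1:])"
    using card_distinct[OF cs] by (simp add: prod.distinct_set_conv_list)
  also have "\<dots> = (\<Prod>k\<in>{1..n}. [: - tri_lambda n a b k, 1 :])"
    unfolding st using prod.reindex[OF lam_inj[OF assms], of "\<lambda>a. [:-a,1:]"] by (simp add: o_def)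
  finally show "char_poly (tri_mat n a b) = (\<Prod>k\<in>{1..n}. [: - tri_lambda n a b k, 1 :])"
    using cp by simp
qed

end
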